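(* Let $A\in\mathbb R^{m\times n}$, $b\in\mathbb R^m$, $p\in[0,1]^n$ and $k\in\mathbb N$, and let $\bar X_1,\dots,\bar X_k\in\{0,1\}^n$ be independent random vectors, each having independent entries with $\Pr((\bar X_l)_i=1)=p_i$. Let $\gamma(p):=\min_{j\in[m]}\{\langle A_j,p\rangle-b_j\}$, where $A_j$ is the $j$-th row of $A$, let $\gamma_+(p):=\max\{\gamma(p),0\}$, and let $\eta:=\max_{j\in[m]}\|A_j\|_2$. Then \[\phi(p,k):=\Pr\big(\exists\,l\in[k]:\ A\bar X_l\ge b\big)\ge1-\exp\!\left(-2k\left[\frac{\gamma_+^2(p)}{\eta^2}-\frac{\log m}{2}\right]_+\right),\] where $[t]_+:=\max\{t,0\}$.
   Context: $[k]=\{1,\dots,k\}$; inequalities between vectors are componentwise. *)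

theory Defs
  imports "HOL-Probability.Probability"
begin

text \<open>Matrices A are functions nat => nat => real (row j, column i), used only for
  j < m, i < n; vectors likewise. Indices are 0-based: [m] is rendered as {..<m}.\<close>

definition pos_part :: "real \<Rightarrow> real" where
  "pos_part t = max t 0"

definition gamma :: "nat \<Rightarrow> nat \<Rightarrow> (nat \<Rightarrow> nat \<Rightarrow> real) \<Rightarrow> (nat \<Rightarrow> real) \<Rightarrow> (nat \<Rightarrow> real) \<Rightarrow> real" where
  "gamma m n A b p = Min ((\<lambda>j. (\<Sum>i<n. A j i * p i) - b j) ` {..<m})"

definition eta :: "nat \<Rightarrow> nat \<Rightarrow> (nat \<Rightarrow> nat \<Rightarrow> real) \<Rightarrow> real" where
  "eta m n A = Max ((\<lambda>j. sqrt (\<Sum>i<n. (A j i)\<^sup>2)) ` {..<m})"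

text \<open>Distribution of one random vector in {0,1}^n with independent Bernoulli(p_i) entries
  (True = 1), and of k independent copies X_0,...,X_(k-1).\<close>
definition bern_vec :: "nat \<Rightarrow> (nat \<Rightarrow> real) \<Rightarrow> (nat \<Rightarrow> bool) pmf" where
  "bern_vec n p = Pi_pmf {..<n} False (\<lambda>i. bernoulli_pmf (p i))"

definition bern_samples :: "nat \<Rightarrow> nat \<Rightarrow> (nat \<Rightarrow> real) \<Rightarrow> (nat \<Rightarrow> nat \<Rightarrow> bool) pmf" where
  "bern_samples k n p = Pi_pmf {..<k} (\<lambda>_. False) (\<lambda>l. bern_vec n p)"

definition phi :: "nat \<Rightarrow> nat \<Rightarrow> (nat \<Rightarrow> nat \<Rightarrow> real) \<Rightarrow> (nat \<Rightarrow> real) \<Rightarrow> (nat \<Rightarrow> real) \<Rightarrow> nat \<Rightarrow> real" where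
  "phi m n A b p k = measure_pmf.prob (bern_samples k n p)
     {X. \<exists>l<k. \<forall>j<m. (\<Sum>i<n. A j i * (if X l i then 1 else 0)) \<ge> b j}"

end

theory Submission imports Defs begin

lemma row_bound:
  fixes n :: nat and a p :: "nat \<Rightarrow> real" and t g :: real
  assumes p: "\<forall>i<n. 0 \<le> p i \<and> p i \<le> 1"
    and g: "g \<ge> 0" "(\<Sum>i<n. a i * p i) - t \<ge> g"
    and S: "(\<Sum>i<n. (a i)\<^sup>2) > 0"
  shows "measure_pmf.prob (bern_vec n p) {x. (\<Sum>i<n. a i * (if x i then 1 else 0)) < t}
     \<le> exp (-2 * g\<^sup>2 / (\<Sum>i<n. (a i)\<^sup>2))"
proof -
  let ?M = "bern_vec n p"
  let ?X = "\<lambda>i (f::nat\<Rightarrow>bool). a i * (if f i then 1 else 0 :: real)"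
  have exp_eq: "measure_pmf.expectation ?M (?X i) = a i * p i" if "i < n" for i
  proof -
    have "measure_pmf.expectation ?M (?X i) =
        measure_pmf.expectation (map_pmf (\<lambda>f. f i) ?M) (\<lambda>b. a i * (if b then 1 else 0 :: real))"
      by simp
    also have "map_pmf (\<lambda>f. f i) ?M = bernoulli_pmf (p i)"
      using that by (simp add: bern_vec_def Pi_pmf_component)
    also have "measure_pmf.expectation (bernoulli_pmf (p i)) (\<lambda>b. a i * (if b then 1 else 0 :: real)) = a i * p i"
      using p that by simp
    finally show ?thesis .
  qed
  interpret H: Hoeffding_ineq "measure_pmf ?M" "{..<n}" ?X "\<lambda>i. min 0 (a i)" "\<lambda>i. max 0 (a i)"
     "\<Sum>i<n. measure_pmf.expectation ?M (?X i)"
  proof unfold_locales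
    show "prob_space.indep_vars (measure_pmf ?M) (\<lambda>_. borel) ?X {..<n}"
      unfolding bern_vec_def
      by (intro prob_space.indep_vars_compose2[OF _ indep_vars_Pi_pmf])
         (auto simp: measure_pmf.prob_space_axioms)
  qed (auto simp: min_def max_def)
  have mu: "(\<Sum>i<n. measure_pmf.expectation ?M (?X i)) = (\<Sum>i<n. a i * p i)"
    using exp_eq by (intro sum.cong) (auto simp del: integral_mult_right_zero)
  have sq: "(\<Sum>i<n. (max 0 (a i) - min 0 (a i))\<^sup>2) = (\<Sum>i<n. (a i)\<^sup>2)"
    by (intro sum.cong) (auto simp: min_def max_def)
  define e where "e = (\<Sum>i<n. a i * p i) - t"
  have "measure_pmf.prob ?M {x. (\<Sum>i<n. ?X i x) < t}
      \<le> measure_pmf.prob ?M {x\<in>space (measure_pmf ?M). (\<Sum>i<n. ?X i x) \<le> (\<Sum>i<n. measure_pmf.expectation ?M (?X i)) - e}"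
    unfolding mu e_def by (intro measure_pmf.finite_measure_mono) auto
  also have "\<dots> \<le> exp (-2 * e\<^sup>2 / (\<Sum>i<n. (max 0 (a i) - min 0 (a i))\<^sup>2))"
    using g S sq unfolding e_def by (intro H.Hoeffding_ineq_le) auto
  also have "\<dots> \<le> exp (-2 * g\<^sup>2 / (\<Sum>i<n. (a i)\<^sup>2))"
    unfolding sq using S g e_def
    by (auto intro!: divide_right_mono power_mono simp: field_simps)
  finally show ?thesis by simp
qed


theorem mainTheorem7:
  fixes m n k :: nat and A :: "nat \<Rightarrow> nat \<Rightarrow> real" and b p :: "nat \<Rightarrow> real"
  assumes "m \<ge> 1"
    and "\<forall>i<n. 0 \<le> p i \<and> p i \<le> 1"
  shows "phi m n A b p k \<ge>
    1 - exp (- 2 * real k * pos_part ((pos_part (gamma m n A b p))\<^sup>2 / (eta m n A)\<^sup>2 - ln (real m) / 2))"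
proof -
  define G where "G = gamma m n A b p"
  define E where "E = eta m n A"
  define c where "c = pos_part ((pos_part G)\<^sup>2 / E\<^sup>2 - ln (real m) / 2)"
  have phi0: "phi m n A b p k \<ge> 0" unfolding phi_def by simp
  show ?thesis
  proof (cases "c = 0")
    case True
    then show ?thesis using phi0 unfolding c_def G_def E_def by simp
  next
    case False
    then have c: "c = (pos_part G)\<^sup>2 / E\<^sup>2 - ln (real m) / 2" "c > 0"
      unfolding c_def pos_part_def by (auto simp: max_def split: if_splits)
    have lnm: "ln (real m) \<ge> 0" using assms(1) by simp
    have "(pos_part G)\<^sup>2 / E\<^sup>2 > 0" using c lnm by linarith
    then have Gpos: "pos_part G > 0" and E2: "E\<^sup>2 > 0"
      by (auto simp: pos_part_def max_def split: if_splits simp: zero_less_divide_iff)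
    then have GG: "pos_part G = G" "G > 0" unfolding pos_part_def by (auto simp: max_def split: if_splits)
    have fin: "finite ((\<lambda>j. sqrt (\<Sum>i<n. (A j i)\<^sup>2)) ` {..<m})" by simp
    have ne: "{..<m} \<noteq> {}" using assms(1) by (simp add: lessThan_empty_iff)
    have Gle: "(\<Sum>i<n. A j i * p i) - b j \<ge> G" if "j < m" for j
      unfolding G_def gamma_def using that by (intro Min_le) auto
    have Ele: "sqrt (\<Sum>i<n. (A j i)\<^sup>2) \<le> E" if "j < m" for j
      unfolding E_def eta_def using that by (intro Max_ge) auto
    define F where "F = {x::nat\<Rightarrow>bool. \<exists>j<m. (\<Sum>i<n. A j i * (if x i then 1 else 0)) < b j}"
    have rowb: "measure_pmf.prob (bern_vec n p) {x. (\<Sum>i<n. A j i * (if x i then 1 else 0)) < b j}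
        \<le> exp (-2 * G\<^sup>2 / E\<^sup>2)" if j: "j < m" for j
    proof (cases "(\<Sum>i<n. (A j i)\<^sup>2) > 0")
      case True
      have "measure_pmf.prob (bern_vec n p) {x. (\<Sum>i<n. A j i * (if x i then 1 else 0)) < b j}
          \<le> exp (-2 * G\<^sup>2 / (\<Sum>i<n. (A j i)\<^sup>2))"
        using row_bound[OF assms(2), of G "A j" "b j"] Gle[OF j] GG True by auto
      also have "\<dots> \<le> exp (-2 * G\<^sup>2 / E\<^sup>2)"
      proof -
        have "(\<Sum>i<n. (A j i)\<^sup>2) = (sqrt (\<Sum>i<n. (A j i)\<^sup>2))\<^sup>2"
          using True by simp
        also have "\<dots> \<le> E\<^sup>2" using Ele[OF j] by (intro power_mono) (auto intro: sum_nonneg)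
        finally have "(\<Sum>i<n. (A j i)\<^sup>2) \<le> E\<^sup>2" .
        then have "G\<^sup>2 / E\<^sup>2 \<le> G\<^sup>2 / (\<Sum>i<n. (A j i)\<^sup>2)"
          using True E2 by (intro divide_left_mono) auto
        then show ?thesis by simp
      qed
      finally show ?thesis .
    next
      case False
      then have "(\<Sum>i<n. (A j i)\<^sup>2) = 0" by (meson not_less sum_nonneg zero_le_power2 order.antisym)
      then have "\<forall>i\<in>{..<n}. (A j i)\<^sup>2 = 0" by (subst (asm) sum_nonneg_eq_0_iff) auto
      then have "{x::nat\<Rightarrow>bool. (\<Sum>i<n. A j i * (if x i then 1 else 0)) < b j} = {}"
        using Gle[OF j] GG by auto
      then show ?thesis by simp
    qed
    define q where "q = measure_pmf.prob (bern_vec n p) F"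
    have "q \<le> (\<Sum>j<m. measure_pmf.prob (bern_vec n p) {x. (\<Sum>i<n. A j i * (if x i then 1 else 0)) < b j})"
    proof -
      have "F = (\<Union>j\<in>{..<m}. {x. (\<Sum>i<n. A j i * (if x i then 1 else 0)) < b j})"
        unfolding F_def by auto
      then show ?thesis unfolding q_def
        by (simp add: measure_pmf.finite_measure_subadditive_finite)
    qed
    also have "\<dots> \<le> (\<Sum>j<m. exp (-2 * G\<^sup>2 / E\<^sup>2))"
      by (intro sum_mono rowb) auto
    also have "\<dots> = exp (ln (real m) - 2 * G\<^sup>2 / E\<^sup>2)"
      using assms(1) by (simp add: exp_diff exp_minus field_simps)
    also have "\<dots> = exp (-2 * c)" using c GG by (simp add: field_simps)
    finally have qle: "q \<le> exp (-2 * c)" .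
    have q0: "q \<ge> 0" unfolding q_def by simp
    have Pi_eq: "{X. \<exists>l<k. \<forall>j<m. (\<Sum>i<n. A j i * (if X l i then 1 else 0)) \<ge> b j}
       = UNIV - Pi {..<k} (\<lambda>_. F)"
      unfolding F_def by (auto simp: Pi_def not_less) (meson not_le)+
    have "phi m n A b p k = 1 - measure_pmf.prob (bern_samples k n p) (Pi {..<k} (\<lambda>_. F))"
      unfolding phi_def Pi_eq using measure_pmf.prob_compl[of "Pi {..<k} (\<lambda>_. F)" "bern_samples k n p"] by simp
    also have "measure_pmf.prob (bern_samples k n p) (Pi {..<k} (\<lambda>_. F)) = q ^ k"
      unfolding bern_samples_def q_def by (subst measure_Pi_pmf_Pi) auto
    finally have phieq: "phi m n A b p k = 1 - q ^ k" .
    have "q ^ k \<le> exp (-2 * c) ^ k" using q0 qle by (intro power_mono) auto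
    also have "\<dots> = exp (- 2 * real k * c)"
      by (subst exp_of_nat_mult[symmetric]) (simp add: algebra_simps)
    finally show ?thesis unfolding phieq c_def G_def E_def by simp
  qed
qed

end
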